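(* Let $G$ be a finite abelian group of type $(m_1,\dots,m_r)$. Then $$\operatorname{diam}^+(G)=\sum_{i=1}^r (m_i-1).$$
   Context: Groups are written additively. A finite abelian group $G$ has type $(m_1,\dots,m_r)$ if $G\cong \mathbb{Z}_{m_1}\oplus\dots\oplus\mathbb{Z}_{m_r}$ with $1\neq m_1\mid m_2\mid\dots\mid m_r$; $r$ is the rank $\operatorname{rk}(G)$. For $A\subseteq G$ let $A_0:=A\cup\{0\}$ and for $\rho\in\mathbb{N}_0$ let $\langle A\rangle^+_\rho:=\rho A_0=\{a_1+\dots+a_\rho: a_i\in A_0\}$ (so $\langle A\rangle_0^+=\{0\}$), the set of elements expressible as a sum of at most $\rho$ elements of $A$. The positive diameter of $G$ with respect to $A$ is $\operatorname{diam}^+_A(G):=\min\{\rho\in\mathbb{N}_0:\langle A\rangle^+_\rho=G\}$ (with $\min\varnothing=\infty$, so it is finite iff $A$ generates $G$). The absolute diameter is $\operatorname{diam}^+(G):=\max\{\operatorname{diam}^+_A(G): A\subseteq G,\ \langle A\rangle=G\}$. *)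

theory Defs
  imports "HOL-Algebra.Algebra" "HOL-Library.Extended_Nat"
begin

text \<open>Groups in HOL-Algebra are written multiplicatively; the group operation
  plays the role of the paper's addition and the unit the role of 0.\<close>

primrec pos_sums :: "('a, 'b) monoid_scheme \<Rightarrow> 'a set \<Rightarrow> nat \<Rightarrow> 'a set" where
  "pos_sums G A 0 = {\<one>\<^bsub>G\<^esub>}"
| "pos_sums G A (Suc n) = {x \<otimes>\<^bsub>G\<^esub> a | x a. x \<in> pos_sums G A n \<and> a \<in> A \<union> {\<one>\<^bsub>G\<^esub>}}"

definition pos_diam_wrt :: "('a, 'b) monoid_scheme \<Rightarrow> 'a set \<Rightarrow> enat" where
  "pos_diam_wrt G A =
     (if \<exists>\<rho>. pos_sums G A \<rho> = carrier G
      then enat (LEAST \<rho>. pos_sums G A \<rho> = carrier G) else \<infinity>)"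

definition pos_diam :: "('a, 'b) monoid_scheme \<Rightarrow> enat" where
  "pos_diam G = Sup {pos_diam_wrt G A | A. A \<subseteq> carrier G \<and> generate G A = carrier G}"

end

theory Submission imports Defs "HOL-Computational_Algebra.Primes" begin

context monoid begin

lemma pos_sums_carrier:
  assumes "A \<subseteq> carrier G" shows "pos_sums G A n \<subseteq> carrier G"
  by (induction n) (use assms in auto)

lemma pos_sums_one: "\<one> \<in> pos_sums G A n"
proof (induction n)
  case (Suc n) then show ?case by (auto intro!: exI[of _ "\<one>"])
qed simp

lemma pos_sums_mult:
  assumes "A \<subseteq> carrier G" "x \<in> pos_sums G A m"
  shows "y \<in> pos_sums G A n \<Longrightarrow> x \<otimes> y \<in> pos_sums G A (m + n)"
proof (induction n arbitrary: y)
  case 0 then show ?case using assms pos_sums_carrier[OF assms(1), of m] by auto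
next
  case (Suc n)
  then obtain z a where z: "y = z \<otimes> a" "z \<in> pos_sums G A n" "a \<in> A \<union> {\<one>}" by auto
  have c: "a \<in> carrier G" "z \<in> carrier G" "x \<in> carrier G"
    using z assms pos_sums_carrier[OF assms(1)] by auto
  have "x \<otimes> y = (x \<otimes> z) \<otimes> a"
    using z(1) c by (simp add: m_assoc)
  then show ?case using Suc.IH[OF z(2)] z(3) by auto
qed

lemma pos_sums_mono:
  assumes "A \<subseteq> carrier G" "x \<in> pos_sums G A m" "m \<le> n"
  shows "x \<in> pos_sums G A n"
proof -
  have "x \<otimes> \<one> \<in> pos_sums G A (m + (n - m))"
    by (rule pos_sums_mult[OF assms(1-2) pos_sums_one])
  moreover have "x \<in> carrier G" using assms pos_sums_carrier[OF assms(1)] by auto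
  ultimately show ?thesis using assms by auto
qed

lemma pos_sums_pow:
  assumes "A \<subseteq> carrier G" "a \<in> A"
  shows "a [^] (j::nat) \<in> pos_sums G A j"
  by (induction j) (use assms in auto)

lemma pos_sums_compose:
  assumes "A \<subseteq> carrier G" "B \<subseteq> pos_sums G A k"
  shows "pos_sums G B n \<subseteq> pos_sums G A (k * n)"
proof (induction n)
  case 0 then show ?case by simp
next
  case (Suc n)
  show ?case
  proof
    fix x assume "x \<in> pos_sums G B (Suc n)"
    then obtain z b where z: "x = z \<otimes> b" "z \<in> pos_sums G B n" "b \<in> B \<union> {\<one>}" by auto
    have b: "b \<in> pos_sums G A k" using z(3) assms pos_sums_one by auto
    have "x \<in> pos_sums G A (k * n + k)"
      using pos_sums_mult[OF assms(1) _ b] Suc z by auto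
    then show "x \<in> pos_sums G A (k * Suc n)" by (simp add: add.commute)
  qed
qed

end

lemma (in group) pos_sums_generate:
  assumes "A \<subseteq> carrier G" shows "pos_sums G A n \<subseteq> generate G A"
proof (induction n)
  case 0 then show ?case by (auto intro: generate.one)
next
  case (Suc n) then show ?case by (auto intro: generate.one generate.eng generate.incl)
qed


lemma (in group) subgroup_nat_pow: "subgroup K G \<Longrightarrow> x \<in> K \<Longrightarrow> x [^] (n::nat) \<in> K"
  by (induction n) (auto intro: subgroup.m_closed subgroup.one_closed)

lemma (in group) pow_notin:
  assumes K: "subgroup K G" and a: "a \<in> carrier G" "a [^] p \<in> K" "a \<notin> K"
    and p: "Factorial_Ring.prime (p::nat)" and d: "0 < d" "d < p"
  shows "a [^] d \<notin> K"
proof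
  assume ad: "a [^] d \<in> K"
  have "\<not> p dvd d" using d by (auto dest: dvd_imp_le)
  then have "coprime p d" using p \<open>\<not> p dvd d\<close> by (intro prime_imp_coprime)
  then have g: "gcd d p = 1" by (simp add: coprime_iff_gcd_eq_1 gcd.commute)
  obtain x y where xy: "d * x = p * y + gcd d p" using bezout_nat[of d p] d by auto
  have "a [^] (d * x) = a [^] (p * y) \<otimes> a" using xy g a by simp
  moreover have "a [^] (d * x) \<in> K" using ad K subgroup_nat_pow[of K "a [^] d" x] a by (simp add: nat_pow_pow)
  moreover have py: "a [^] (p * y) \<in> K" using a K subgroup_nat_pow[of K "a [^] p" y] by (simp add: nat_pow_pow)
  ultimately have "a [^] (p * y) \<otimes> a \<in> K" by simp
  moreover have "a = inv (a [^] (p * y)) \<otimes> (a [^] (p * y) \<otimes> a)"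
    using a by (simp add: m_assoc[symmetric])
  ultimately show False using a(3) K py by (metis subgroup.m_closed subgroup.m_inv_closed)
qed

lemma (in comm_group) tower:
  assumes fin: "finite (carrier G)" and p: "Factorial_Ring.prime p" and S: "subgroup S G"
    and A: "A \<subseteq> S" "generate G A = S"
  shows "subgroup K G \<Longrightarrow> K \<subseteq> S \<Longrightarrow> (\<forall>x\<in>S. x [^] p \<in> K) \<Longrightarrow> card S \<le> p ^ t * card K
     \<Longrightarrow> \<forall>x\<in>S. \<exists>k\<in>K. \<exists>s\<in>pos_sums G A ((p - 1) * t). x = k \<otimes> s"
proof (induction t arbitrary: K)
  have Sc: "S \<subseteq> carrier G" using S by (rule subgroup.subset)
  have Ac: "A \<subseteq> carrier G" using A Sc by auto
  have finS: "finite S" using fin Sc finite_subset by auto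
  {
    case (0 K)
    then have "K = S" using finS by (intro card_seteq) auto
    then show ?case using Sc pos_sums_one r_one by (metis subsetD)
  }
  {
    case (Suc t K)
    show ?case
    proof (cases "K = S")
      case True then show ?thesis using Sc pos_sums_one r_one by (metis subsetD)
    next
      case False
      obtain a where a: "a \<in> A" "a \<notin> K"
      proof (rule ccontr)
        assume "\<not> thesis"
        then have "A \<subseteq> K" using that by auto
        then have "S \<subseteq> K" using generate_subgroup_incl[OF _ Suc.prems(1)] A by auto
        then show False using False Suc.prems(2) by auto
      qed
      have aS: "a \<in> S" and ac: "a \<in> carrier G" using a A Sc by auto
      have apK: "a [^] p \<in> K" using Suc.prems(3) aS by auto
      have Kc: "K \<subseteq> carrier G" using Suc.prems(1) by (rule subgroup.subset)
      have p0: "0 < p" using p prime_gt_0_nat by auto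
      define K' where "K' = {k \<otimes> a [^] j | k j. k \<in> K \<and> j < p}"
      have KK': "K \<subseteq> K'"
      proof
        fix k assume "k \<in> K" then show "k \<in> K'" unfolding K'_def using p0 Kc
          by (auto intro!: exI[of _ k] exI[of _ "0::nat"])
      qed
      have K'S: "K' \<subseteq> S" unfolding K'_def using Suc.prems(2) aS S
        by (auto intro!: subgroup.m_closed[OF S] subgroup_nat_pow[OF S])
      have K'c: "K' \<subseteq> carrier G" using K'S Sc by auto
      have subK': "subgroup K' G"
      proof (rule subgroupI)
        show "K' \<subseteq> carrier G" by (rule K'c)
        show "K' \<noteq> {}" using KK' subgroup.one_closed[OF Suc.prems(1)] by auto
      next
        fix b assume "b \<in> K'"
        then obtain k j where kj: "b = k \<otimes> a [^] j" "k \<in> K" "j < p" unfolding K'_def by auto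
        have kc: "k \<in> carrier G" using kj Kc by auto
        show "inv b \<in> K'"
        proof (cases "j = 0")
          case True
          then have "inv b = inv k \<otimes> a [^] (0::nat)" using kj kc by simp
          then show ?thesis unfolding K'_def using kj p0 subgroup.m_inv_closed[OF Suc.prems(1)] by blast
        next
          case False
          have "a [^] p = a [^] j \<otimes> a [^] (p - j)" using kj ac by (simp add: nat_pow_mult)
          then have "inv b = (inv k \<otimes> inv (a [^] p)) \<otimes> a [^] (p - j)"
            using kj kc ac by (simp add: inv_mult m_ac)
          moreover have "inv k \<otimes> inv (a [^] p) \<in> K"
            using kj apK Suc.prems(1) by (meson subgroup.m_closed subgroup.m_inv_closed)
          moreover have "p - j < p" using False kj by auto
          ultimately show ?thesis unfolding K'_def
            by (intro CollectI exI[of _ "inv k \<otimes> inv (a [^] p)"] exI[of _ "p - j"]) simp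
        qed
      next
        fix b c assume "b \<in> K'" "c \<in> K'"
        then obtain k j k' j' where kj: "b = k \<otimes> a [^] j" "k \<in> K" "j < p"
          and kj': "c = k' \<otimes> a [^] j'" "k' \<in> K" "j' < p" unfolding K'_def by auto
        have kc: "k \<in> carrier G" "k' \<in> carrier G" using kj kj' Kc by auto
        have kk: "k \<otimes> k' \<in> K" using kj kj' Suc.prems(1) by (meson subgroup.m_closed)
        have bc: "b \<otimes> c = (k \<otimes> k') \<otimes> a [^] (j + j')"
          using kj kj' kc ac by (simp add: m_ac nat_pow_mult[symmetric])
        show "b \<otimes> c \<in> K'"
        proof (cases "j + j' < p")
          case True then show ?thesis using bc kk unfolding K'_def by auto
        next
          case False
          have "a [^] (j + j') = a [^] p \<otimes> a [^] (j + j' - p)" using False ac by (simp add: nat_pow_mult)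
          then have "b \<otimes> c = (k \<otimes> k' \<otimes> a [^] p) \<otimes> a [^] (j + j' - p)"
            using bc kc ac by (simp add: m_ac)
          moreover have "k \<otimes> k' \<otimes> a [^] p \<in> K" using kk apK Suc.prems(1) by (meson subgroup.m_closed)
          moreover have "j + j' - p < p" using kj kj' by auto
          ultimately show ?thesis unfolding K'_def by auto
        qed
      qed
      have finK: "finite K" using Kc fin finite_subset by auto
      have finK': "finite K'" using K'c fin finite_subset by auto
      have inj: "inj_on (\<lambda>(k, j). k \<otimes> a [^] j) (K \<times> {..<p})"
      proof (rule inj_onI, clarsimp)
        fix k j k' j' assume h: "k \<otimes> a [^] j = k' \<otimes> a [^] j'" "k \<in> K" "j < p" "k' \<in> K" "j' < p"
        have kc: "k \<in> carrier G" "k' \<in> carrier G" using h Kc by auto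
        have jj: "j = j'"
        proof (rule ccontr)
          assume ne: "j \<noteq> j'"
          {
            fix k j k' j' assume h: "k \<otimes> a [^] j = k' \<otimes> a [^] j'" "k \<in> K" "j < p" "k' \<in> K" "j' < p" "j < j'"
            have kc: "k \<in> carrier G" "k' \<in> carrier G" using h Kc by auto
            have e: "a [^] j' = a [^] j \<otimes> a [^] (j' - j)" using h ac by (simp add: nat_pow_mult)
            have "k \<otimes> a [^] j = (k' \<otimes> a [^] (j' - j)) \<otimes> a [^] j"
              using h(1) unfolding e using kc ac by (simp add: m_ac)
            then have "k = k' \<otimes> a [^] (j' - j)"
              using r_cancel[of "a [^] j" k "k' \<otimes> a [^] (j' - j)"] kc ac by auto
            then have "a [^] (j' - j) = inv k' \<otimes> k" using kc ac by (simp add: m_assoc[symmetric])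
            moreover have "inv k' \<otimes> k \<in> K" using h Suc.prems(1) by (meson subgroup.m_closed subgroup.m_inv_closed)
            moreover have "a [^] (j' - j) \<notin> K"
              by (rule pow_notin[OF Suc.prems(1) ac apK a(2) p]) (use h in auto)
            ultimately have False by auto
          }
          then show False using h ne by (metis linorder_neqE_nat)
        qed
        then show "k = k' \<and> j = j'" using h kc ac by auto
      qed
      have "(\<lambda>(k, j). k \<otimes> a [^] j) ` (K \<times> {..<p}) \<subseteq> K'" unfolding K'_def by auto
      then have "card (K \<times> {..<p}) \<le> card K'" using card_inj_on_le[OF inj _ finK'] by auto
      then have cK': "card K * p \<le> card K'" by (simp add: card_cartesian_product)
      have "card S \<le> p ^ t * (p * card K)" using Suc.prems(4) by (simp add: ac_simps)
      also have "\<dots> \<le> p ^ t * card K'" using cK' by (simp add: mult.commute)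
      finally have cS: "card S \<le> p ^ t * card K'" .
      have IH: "\<forall>x\<in>S. \<exists>k\<in>K'. \<exists>s\<in>pos_sums G A ((p - 1) * t). x = k \<otimes> s"
        using Suc.IH[OF subK' K'S _ cS] Suc.prems(3) KK' by auto
      show ?thesis
      proof
        fix x assume "x \<in> S"
        then obtain k' s where ks: "k' \<in> K'" "s \<in> pos_sums G A ((p - 1) * t)" "x = k' \<otimes> s" using IH by auto
        then obtain k j where kj: "k' = k \<otimes> a [^] j" "k \<in> K" "j < p" unfolding K'_def by auto
        have sc: "s \<in> carrier G" using ks pos_sums_carrier[OF Ac] by auto
        have "a [^] j \<otimes> s \<in> pos_sums G A (j + (p - 1) * t)"
          by (rule pos_sums_mult[OF Ac pos_sums_pow[OF Ac a(1)] ks(2)])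
        then have "a [^] j \<otimes> s \<in> pos_sums G A ((p - 1) * Suc t)"
          by (rule pos_sums_mono[OF Ac]) (use kj in auto)
        moreover have "x = k \<otimes> (a [^] j \<otimes> s)" using ks kj Kc ac sc by (simp add: m_assoc subset_iff)
        ultimately show "\<exists>k\<in>K. \<exists>s\<in>pos_sums G A ((p - 1) * Suc t). x = k \<otimes> s" using kj by auto
      qed
    qed
  }
qed


primrec mp :: "('a, 'b) monoid_scheme \<Rightarrow> (nat \<Rightarrow> 'a) \<Rightarrow> (nat \<Rightarrow> nat) \<Rightarrow> nat \<Rightarrow> 'a" where
  "mp G g c 0 = \<one>\<^bsub>G\<^esub>"
| "mp G g c (Suc k) = mp G g c k \<otimes>\<^bsub>G\<^esub> (g k [^]\<^bsub>G\<^esub> c k)"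

definition basis :: "('a, 'b) monoid_scheme \<Rightarrow> 'a set \<Rightarrow> nat \<Rightarrow> (nat \<Rightarrow> nat) \<Rightarrow> (nat \<Rightarrow> 'a) \<Rightarrow> bool" where
  "basis G S r n g \<longleftrightarrow> (\<forall>i<r. g i \<in> S \<and> g i [^]\<^bsub>G\<^esub> n i = \<one>\<^bsub>G\<^esub>)
     \<and> bij_betw (\<lambda>c. mp G g c r) (PiE {..<r} (\<lambda>i. {..<n i})) S"

lemma mp_cong: "(\<And>i. i < k \<Longrightarrow> c i = c' i) \<Longrightarrow> mp G g c k = mp G g c' k"
  by (induction k) auto

lemma basis_card: "basis G S r n g \<Longrightarrow> card S = (\<Prod>i<r. n i)"
  unfolding basis_def by (auto dest!: bij_betw_same_card simp: card_PiE)

context comm_group begin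

lemma mp_closed: "subgroup S G \<Longrightarrow> (\<And>i. i < k \<Longrightarrow> g i \<in> S) \<Longrightarrow> mp G g c k \<in> S"
  by (induction k) (auto intro: subgroup.m_closed subgroup.one_closed subgroup_nat_pow)

lemma mp_carrier: "(\<And>i. i < k \<Longrightarrow> g i \<in> carrier G) \<Longrightarrow> mp G g c k \<in> carrier G"
  using mp_closed[OF subgroup_self] by blast

lemma mp_pow: "(\<And>i. i < k \<Longrightarrow> g i \<in> carrier G) \<Longrightarrow> (mp G g c k) [^] (p::nat) = mp G g (\<lambda>i. p * c i) k"
proof (induction k)
  case (Suc k)
  have "(mp G g c (Suc k)) [^] p = (mp G g c k) [^] p \<otimes> (g k [^] c k) [^] p"
    using Suc.prems by (simp add: nat_pow_distrib mp_carrier)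
  also have "\<dots> = mp G g (\<lambda>i. p * c i) (Suc k)"
    using Suc by (simp add: nat_pow_pow mult.commute)
  finally show ?case .
qed simp

lemma mp_gpow: "(\<And>i. i < k \<Longrightarrow> g i \<in> carrier G) \<Longrightarrow> mp G (\<lambda>i. g i [^] (p::nat)) c k = mp G g (\<lambda>i. p * c i) k"
  by (induction k) (auto simp: nat_pow_pow)

lemma mp_mod:
  assumes "\<And>i. i < k \<Longrightarrow> g i \<in> carrier G \<and> g i [^] n i = \<one>"
  shows "mp G g c k = mp G g (\<lambda>i. c i mod n i) k"
  using assms
proof (induction k)
  case (Suc k)
  have gk: "g k \<in> carrier G" "g k [^] n k = \<one>" using Suc.prems by auto
  have "g k [^] (c k mod n k) \<otimes> (g k [^] n k) [^] (c k div n k) = g k [^] c k"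
    using gk(1) by (simp only: nat_pow_pow nat_pow_mult mod_mult_div_eq)
  then have "g k [^] c k = g k [^] (c k mod n k)" using gk by simp
  then show ?case using Suc by simp
qed simp

lemma mp_upd:
  assumes "\<And>i. i < k \<Longrightarrow> g i \<in> carrier G"
  shows "mp G g (c(j := c j + 1)) k = (if j < k then mp G g c k \<otimes> g j else mp G g c k)"
  using assms
proof (induction k)
  case (Suc k)
  have gk: "g k \<in> carrier G" using Suc.prems by auto
  have mc: "mp G g c k \<in> carrier G" using Suc.prems by (auto intro: mp_carrier)
  show ?case
  proof (cases "j = k")
    case True
    have e: "mp G g (c(j := c j + 1)) k = mp G g c k" using True by (intro mp_cong) auto
    have "mp G g (c(j := c j + 1)) (Suc k) = mp G g (c(j := c j + 1)) k \<otimes> g k [^] (c k + 1)"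
      using True by (simp only: mp.simps fun_upd_same)
    also have "\<dots> = mp G g c k \<otimes> g k [^] c k \<otimes> g k" unfolding e using gk mc by (simp add: m_assoc)
    finally have "mp G g (c(j := c j + 1)) (Suc k) = mp G g c (Suc k) \<otimes> g j" using True by (simp only: mp.simps)
    then show ?thesis using True by (simp only: lessI if_True)
  next
    case False
    have e: "mp G g (c(j := c j + 1)) (Suc k) = mp G g (c(j := c j + 1)) k \<otimes> g k [^] c k"
      using False by simp
    have IH: "mp G g (c(j := c j + 1)) k = (if j < k then mp G g c k \<otimes> g j else mp G g c k)"
      by (rule Suc.IH) (use Suc.prems in auto)
    show ?thesis
    proof (cases "j < k")
      case True
      have gj: "g j \<in> carrier G" using True Suc.prems by auto
      have "mp G g (c(j := c j + 1)) k = mp G g c k \<otimes> g j" using IH[unfolded if_P[OF True]] .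
      then have "mp G g (c(j := c j + 1)) (Suc k) = (mp G g c k \<otimes> g j) \<otimes> g k [^] c k" using e by simp
      also have "\<dots> = (mp G g c k \<otimes> g k [^] c k) \<otimes> g j"
        using gj gk mc by (simp add: m_ac)
      also have "\<dots> = mp G g c (Suc k) \<otimes> g j" by simp
      finally show ?thesis unfolding if_P[OF less_SucI[OF True]] .
    next
      case False': False
      have e2: "mp G g (c(j := c j + 1)) k = mp G g c k" using IH[unfolded if_not_P[OF False']] .
      have nj: "\<not> j < Suc k" using False False' by auto
      have "mp G g (c(j := c j + 1)) (Suc k) = mp G g c k \<otimes> g k [^] c k" unfolding e e2 ..
      also have "\<dots> = mp G g c (Suc k)" by simp
      finally show ?thesis unfolding if_not_P[OF nj] .
    qed
  qed
qed simp

lemma pth_subgroup: "subgroup S G \<Longrightarrow> subgroup ((\<lambda>x. x [^] (p::nat)) ` S) G"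
proof (rule subgroupI)
  assume S: "subgroup S G"
  have Sc: "\<And>x. x \<in> S \<Longrightarrow> x \<in> carrier G" using subgroup.subset[OF S] by auto
  show "(\<lambda>x. x [^] p) ` S \<subseteq> carrier G" using Sc by auto
  have "\<one> \<in> S" by (rule subgroup.one_closed[OF S])
  then show "(\<lambda>x. x [^] p) ` S \<noteq> {}" by auto
  fix a b assume "a \<in> (\<lambda>x. x [^] p) ` S" "b \<in> (\<lambda>x. x [^] p) ` S"
  then obtain x y where xy: "a = x [^] p" "b = y [^] p" "x \<in> S" "y \<in> S" by auto
  have c: "x \<in> carrier G" "y \<in> carrier G" using xy Sc by auto
  have e1: "inv a = (inv x) [^] p" using xy c by (simp add: nat_pow_inv)
  have i1: "inv x \<in> S" by (rule subgroup.m_inv_closed[OF S xy(3)])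
  show "inv a \<in> (\<lambda>x. x [^] p) ` S" unfolding e1 using i1 by (rule imageI)
  have e2: "a \<otimes> b = (x \<otimes> y) [^] p" using xy c by (simp add: nat_pow_distrib)
  have i2: "x \<otimes> y \<in> S" by (rule subgroup.m_closed[OF S xy(3,4)])
  show "a \<otimes> b \<in> (\<lambda>x. x [^] p) ` S" unfolding e2 using i2 by (rule imageI)
qed

lemma pth_generate:
  assumes "A \<subseteq> carrier G"
  shows "generate G ((\<lambda>x. x [^] (p::nat)) ` A) = (\<lambda>x. x [^] p) ` generate G A"
proof
  have "subgroup ((\<lambda>x. x [^] p) ` generate G A) G"
    by (rule pth_subgroup[OF generate_is_subgroup[OF assms]])
  moreover have "(\<lambda>x. x [^] p) ` A \<subseteq> (\<lambda>x. x [^] p) ` generate G A"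
    by (rule image_mono) (auto intro: generate.incl)
  ultimately show "generate G ((\<lambda>x. x [^] p) ` A) \<subseteq> (\<lambda>x. x [^] p) ` generate G A"
    by (rule generate_subgroup_incl[rotated])
next
  have A': "(\<lambda>x. x [^] p) ` A \<subseteq> carrier G" using assms by auto
  have "x [^] p \<in> generate G ((\<lambda>x. x [^] p) ` A)" if "x \<in> generate G A" for x
    using that
  proof (induction x rule: generate.induct)
    case one then show ?case by (simp add: generate.one)
  next
    case (incl h) then show ?case by (simp add: generate.incl)
  next
    case (inv h)
    then have eq: "inv h [^] p = inv (h [^] p)" using assms by (auto simp: nat_pow_inv)
    have "h [^] p \<in> (\<lambda>x. x [^] p) ` A" using inv by auto
    then show ?case unfolding eq by (rule generate.inv)
  next
    case (eng h1 h2)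
    have "(h1 \<otimes> h2) [^] p = h1 [^] p \<otimes> h2 [^] p"
      using eng.hyps generate_in_carrier[OF assms] by (simp add: nat_pow_distrib)
    then show ?case by (simp only:) (rule generate.eng[OF eng.IH])
  qed
  then show "(\<lambda>x. x [^] p) ` generate G A \<subseteq> generate G ((\<lambda>x. x [^] p) ` A)" by blast
qed

end

lemma chain_dvd:
  assumes "\<forall>i. Suc i < r \<longrightarrow> n i dvd n (Suc i)"
  shows "i \<le> k \<Longrightarrow> k < r \<Longrightarrow> (n i :: nat) dvd n k"
proof (induction k)
  case 0 then show ?case by simp
next
  case (Suc k)
  show ?case
  proof (cases "i = Suc k")
    case False
    then have "n i dvd n k" using Suc by auto
    then show ?thesis using assms Suc.prems dvd_trans by blast
  qed simp
qed

lemma prod_split: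
  fixes n :: "nat \<Rightarrow> nat"
  assumes "\<forall>i<r. (n i::nat) = 1 \<or> p dvd n i"
  shows "(\<Prod>i<r. n i) = p ^ card {i\<in>{..<r}. p dvd n i} * (\<Prod>i<r. if p dvd n i then n i div p else n i)"
proof -
  have "(\<Prod>i<r. n i) = (\<Prod>i<r. (if p dvd n i then p else 1) * (if p dvd n i then n i div p else n i))"
    by (rule prod.cong) auto
  also have "\<dots> = (\<Prod>i<r. (if p dvd n i then p else 1)) * (\<Prod>i<r. if p dvd n i then n i div p else n i)"
    by (rule prod.distrib)
  also have "(\<Prod>i<r. (if p dvd n i then p else 1)) = (\<Prod>i\<in>{i\<in>{..<r}. p dvd n i}. p)"
    by (rule prod.inter_filter[symmetric]) simp
  finally show ?thesis by simp
qed

lemma sum_split: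
  fixes n :: "nat \<Rightarrow> nat"
  assumes "\<forall>i<r. (n i::nat) = 1 \<or> p dvd n i" "\<forall>i<r. 0 < n i"
  shows "(\<Sum>i<r. n i - 1) = p * (\<Sum>i<r. (if p dvd n i then n i div p else n i) - 1) + (p - 1) * card {i\<in>{..<r}. p dvd n i}"
proof -
  have "(\<Sum>i<r. n i - 1) = (\<Sum>i<r. p * ((if p dvd n i then n i div p else n i) - 1) + (if p dvd n i then p - 1 else 0))"
  proof (rule sum.cong)
    fix i assume "i \<in> {..<r}"
    then have i: "n i = 1 \<or> p dvd n i" "0 < n i" using assms by auto
    show "n i - 1 = p * ((if p dvd n i then n i div p else n i) - 1) + (if p dvd n i then p - 1 else 0)"
    proof (cases "p dvd n i")
      case True
      then obtain q where q: "n i = p * q" by auto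
      then have "0 < q" "0 < p" using i by auto
      then show ?thesis using q True by (simp add: algebra_simps)
    next
      case False then show ?thesis using i by auto
    qed
  qed simp
  also have "\<dots> = p * (\<Sum>i<r. (if p dvd n i then n i div p else n i) - 1) + (\<Sum>i<r. if p dvd n i then p - 1 else 0)"
    by (simp add: sum.distrib sum_distrib_left)
  also have "(\<Sum>i<r. if p dvd n i then p - 1 else 0) = (\<Sum>i\<in>{i\<in>{..<r}. p dvd n i}. p - 1)"
    by (rule sum.inter_filter[symmetric]) simp
  finally show ?thesis by (simp add: mult.commute)
qed

lemma (in comm_group) basis_pth:
  assumes S: "subgroup S G" and B: "basis G S r n g" and p: "Factorial_Ring.prime p"
    and np: "\<forall>i<r. n i = 1 \<or> p dvd n i" and pos: "\<forall>i<r. 0 < n i"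
  shows "basis G ((\<lambda>x. x [^] p) ` S) r (\<lambda>i. if p dvd n i then n i div p else n i) (\<lambda>i. g i [^] p)"
proof -
  define n' where "n' = (\<lambda>i. if p dvd n i then n i div p else n i)"
  have p0: "0 < p" using p prime_gt_0_nat by auto
  have gS: "\<And>i. i < r \<Longrightarrow> g i \<in> S" and gn: "\<And>i. i < r \<Longrightarrow> g i [^] n i = \<one>"
    and bij: "bij_betw (\<lambda>c. mp G g c r) (PiE {..<r} (\<lambda>i. {..<n i})) S"
    using B unfolding basis_def by auto
  have gc: "\<And>i. i < r \<Longrightarrow> g i \<in> carrier G" using gS subgroup.subset[OF S] by auto
  have n'pos: "0 < n' i" if i: "i < r" for i
  proof (cases "p dvd n i")
    case True
    have "p \<le> n i" using True pos i by (intro dvd_imp_le) auto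
    then show ?thesis using True p0 unfolding n'_def by (simp add: div_greater_zero_iff)
  next
    case False then show ?thesis using pos i unfolding n'_def by simp
  qed
  have part1: "\<forall>i<r. g i [^] p \<in> (\<lambda>x. x [^] p) ` S \<and> (g i [^] p) [^] n' i = \<one>"
  proof (intro allI impI conjI)
    fix i assume i: "i < r"
    show "g i [^] p \<in> (\<lambda>x. x [^] p) ` S" using gS i by auto
    show "(g i [^] p) [^] n' i = \<one>"
    proof (cases "p dvd n i")
      case True
      then have "p * n' i = n i" unfolding n'_def by simp
      then show ?thesis using gc[OF i] gn[OF i] by (simp add: nat_pow_pow)
    next
      case False
      then have "n i = 1" "n' i = 1" using np i unfolding n'_def by auto
      then have "g i = \<one>" using gn[OF i] gc[OF i] by simp
      then show ?thesis by simp
    qed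
  qed
  have key: "\<And>c. mp G (\<lambda>i. g i [^] p) c r = mp G g (\<lambda>i. p * c i) r"
    by (rule mp_gpow[OF gc])
  have inj0: "inj_on (\<lambda>c. mp G g c r) (PiE {..<r} (\<lambda>i. {..<n i}))" using bij unfolding bij_betw_def by auto
  have img0: "(\<lambda>c. mp G g c r) ` (PiE {..<r} (\<lambda>i. {..<n i})) = S" using bij unfolding bij_betw_def by auto
  have fin: "restrict (\<lambda>i. p * c i) {..<r} \<in> PiE {..<r} (\<lambda>i. {..<n i})" if c: "c \<in> PiE {..<r} (\<lambda>i. {..<n' i})" for c
  proof -
    have "p * c i < n i" if i: "i < r" for i
    proof (cases "p dvd n i")
      case True
      then obtain q where q: "n i = p * q" by auto
      have "c i < n' i" using PiE_mem[OF c, of i] i by simp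
      moreover have "n' i = q" using q p0 True unfolding n'_def by simp
      ultimately have "c i < q" by simp
      then show ?thesis using q p0 by simp
    next
      case False
      then have "n i = 1" "n' i = 1" using np i unfolding n'_def by auto
      moreover have "c i < n' i" using PiE_mem[OF c, of i] i by simp
      ultimately show ?thesis by simp
    qed
    then show ?thesis by (auto simp: PiE_iff)
  qed
  have mpr: "mp G g (restrict (\<lambda>i. p * c i) {..<r}) r = mp G g (\<lambda>i. p * c i) r" for c
    by (rule mp_cong) auto
  have inj: "inj_on (\<lambda>c. mp G (\<lambda>i. g i [^] p) c r) (PiE {..<r} (\<lambda>i. {..<n' i}))"
  proof (rule inj_onI)
    fix c c' assume c: "c \<in> PiE {..<r} (\<lambda>i. {..<n' i})" and c': "c' \<in> PiE {..<r} (\<lambda>i. {..<n' i})"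
      and eq: "mp G (\<lambda>i. g i [^] p) c r = mp G (\<lambda>i. g i [^] p) c' r"
    have "mp G g (restrict (\<lambda>i. p * c i) {..<r}) r = mp G g (restrict (\<lambda>i. p * c' i) {..<r}) r"
      using eq unfolding key mpr .
    then have rr: "restrict (\<lambda>i. p * c i) {..<r} = restrict (\<lambda>i. p * c' i) {..<r}"
      by (rule inj_onD[OF inj0 _ fin[OF c] fin[OF c']])
    have "c i = c' i" if i: "i < r" for i
    proof -
      have "p * c i = p * c' i" using fun_cong[OF rr, of i] i by simp
      then show ?thesis using p0 by simp
    qed
    then show "c = c'" using c c' by (intro PiE_ext) auto
  qed
  have img: "(\<lambda>c. mp G (\<lambda>i. g i [^] p) c r) ` (PiE {..<r} (\<lambda>i. {..<n' i})) = (\<lambda>x. x [^] p) ` S"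
  proof
    show "(\<lambda>c. mp G (\<lambda>i. g i [^] p) c r) ` (PiE {..<r} (\<lambda>i. {..<n' i})) \<subseteq> (\<lambda>x. x [^] p) ` S"
    proof clarify
      fix c assume "c \<in> PiE {..<r} (\<lambda>i. {..<n' i})"
      have "mp G (\<lambda>i. g i [^] p) c r = (mp G g c r) [^] p" by (simp add: key mp_pow[OF gc])
      moreover have "mp G g c r \<in> S" by (rule mp_closed[OF S gS])
      ultimately show "mp G (\<lambda>i. g i [^] p) c r \<in> (\<lambda>x. x [^] p) ` S" by (rule image_eqI)
    qed
  next
    show "(\<lambda>x. x [^] p) ` S \<subseteq> (\<lambda>c. mp G (\<lambda>i. g i [^] p) c r) ` (PiE {..<r} (\<lambda>i. {..<n' i}))"
    proof clarify
      fix x assume "x \<in> S"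
      then obtain c where c: "c \<in> PiE {..<r} (\<lambda>i. {..<n i})" "x = mp G g c r" using img0 by auto
      define c' where "c' = restrict (\<lambda>i. c i mod n' i) {..<r}"
      have c'P: "c' \<in> PiE {..<r} (\<lambda>i. {..<n' i})" unfolding c'_def using n'pos by auto
      have gcn: "\<And>i. i < r \<Longrightarrow> g i \<in> carrier G \<and> g i [^] n i = \<one>" using gc gn by auto
      have mm: "p * c' i mod n i = p * c i mod n i" if i: "i < r" for i
      proof (cases "p dvd n i")
        case True
        then obtain q where q: "n i = p * q" by auto
        have "n' i = q" using q p0 True unfolding n'_def by auto
        have c'i: "c' i = c i mod q" unfolding c'_def using i \<open>n' i = q\<close> by simp
        have "p * c' i = p * c i mod n i" unfolding c'i q by (rule mult_mod_right)
        then show ?thesis by simp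
      next
        case False
        then have "n i = 1" using np i by auto
        then show ?thesis by simp
      qed
      have "mp G (\<lambda>i. g i [^] p) c' r = mp G g (\<lambda>i. p * c' i) r" by (rule key)
      also have "\<dots> = mp G g (\<lambda>i. p * c' i mod n i) r" by (rule mp_mod[OF gcn])
      also have "\<dots> = mp G g (\<lambda>i. p * c i mod n i) r" by (rule mp_cong) (use mm in auto)
      also have "\<dots> = mp G g (\<lambda>i. p * c i) r" by (rule mp_mod[OF gcn, symmetric])
      also have "\<dots> = x [^] p" by (simp add: c(2) mp_pow[OF gc])
      finally have eqx: "mp G (\<lambda>i. g i [^] p) c' r = x [^] p" .
      show "x [^] p \<in> (\<lambda>c. mp G (\<lambda>i. g i [^] p) c r) ` (PiE {..<r} (\<lambda>i. {..<n' i}))"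
        unfolding eqx[symmetric] using c'P by (rule imageI)
    qed
  qed
  show ?thesis unfolding basis_def bij_betw_def n'_def[symmetric]
    using part1 inj img by blast
qed


lemma (in comm_group) upper_bound:
  assumes fin: "finite (carrier G)"
  shows "subgroup S G \<Longrightarrow> basis G S r n g \<Longrightarrow> (\<forall>i<r. 0 < n i) \<Longrightarrow> (\<forall>i. Suc i < r \<longrightarrow> n i dvd n (Suc i))
    \<Longrightarrow> A \<subseteq> S \<Longrightarrow> generate G A = S \<Longrightarrow> S \<subseteq> pos_sums G A (\<Sum>i<r. n i - 1)"
proof (induction "\<Sum>i<r. n i" arbitrary: S n g A rule: less_induct)
  case less
  note S = less.prems(1) and B = less.prems(2) and pos = less.prems(3) and ch = less.prems(4)
    and A = less.prems(5,6)
  have Sc: "S \<subseteq> carrier G" using S subgroup.subset by blast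
  have Ac: "A \<subseteq> carrier G" using A Sc by auto
  show ?case
  proof (cases "\<forall>i<r. n i = 1")
    case True
    then have "card S = 1" using basis_card[OF B] by simp
    then obtain z where "S = {z}" by (auto simp: card_Suc_eq)
    then have "S = {\<one>}" using subgroup.one_closed[OF S] by auto
    then show ?thesis using pos_sums_one by auto
  next
    case False
    define j where "j = (LEAST i. i < r \<and> 1 < n i)"
    have ex: "\<exists>i. i < r \<and> 1 < n i" using False pos by (metis less_one nat_neq_iff)
    have j: "j < r" "1 < n j" using LeastI_ex[OF ex] unfolding j_def by auto
    obtain p where p: "Factorial_Ring.prime p" "p dvd n j" using prime_factor_nat[of "n j"] j by auto
    have p1: "1 < p" using p prime_gt_1_nat by auto
    have np: "\<forall>i<r. n i = 1 \<or> p dvd n i"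
    proof (intro allI impI)
      fix i assume i: "i < r"
      show "n i = 1 \<or> p dvd n i"
      proof (cases "i < j")
        case True
        then have "\<not> (i < r \<and> 1 < n i)" unfolding j_def by (rule not_less_Least)
        then show ?thesis using i pos by (metis less_one nat_neq_iff)
      next
        case False
        then have "n j dvd n i" using chain_dvd[OF ch] i by auto
        then show ?thesis using p dvd_trans by blast
      qed
    qed
    define n' where "n' = (\<lambda>i. if p dvd n i then n i div p else n i)"
    define H where "H = (\<lambda>x. x [^] p) ` S"
    define A' where "A' = (\<lambda>x. x [^] p) ` A"
    have subH: "subgroup H G" unfolding H_def by (rule pth_subgroup[OF S])
    have BH: "basis G H r n' (\<lambda>i. g i [^] p)" unfolding H_def n'_def by (rule basis_pth[OF S B p(1) np pos])
    have pos': "\<forall>i<r. 0 < n' i"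
    proof (intro allI impI)
      fix i assume i: "i < r"
      show "0 < n' i"
      proof (cases "p dvd n i")
        case True
        have "p \<le> n i" using True pos i by (intro dvd_imp_le) auto
        then show ?thesis using True p1 unfolding n'_def by (simp add: div_greater_zero_iff)
      next
        case False then show ?thesis using pos i unfolding n'_def by simp
      qed
    qed
    have ch': "\<forall>i. Suc i < r \<longrightarrow> n' i dvd n' (Suc i)"
    proof (intro allI impI)
      fix i assume i: "Suc i < r"
      have d: "n i dvd n (Suc i)" using ch i by auto
      show "n' i dvd n' (Suc i)"
      proof (cases "p dvd n i")
        case True
        then have "p dvd n (Suc i)" using d dvd_trans by blast
        then show ?thesis using True d unfolding n'_def by simp
      next
        case False
        have "i < r" using i by simp
        then have "n i = 1" using np False by blast
        then show ?thesis unfolding n'_def by simp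
      qed
    qed
    have lt: "(\<Sum>i<r. n' i) < (\<Sum>i<r. n i)"
    proof (rule sum_strict_mono_ex1)
      show "\<forall>x\<in>{..<r}. n' x \<le> n x" unfolding n'_def by auto
      have "n j div p < n j" using j p1 by (intro div_less_dividend) auto
      then show "\<exists>a\<in>{..<r}. n' a < n a" using j p unfolding n'_def by auto
    qed simp
    have A'H: "A' \<subseteq> H" unfolding A'_def H_def using A by auto
    have genA': "generate G A' = H" unfolding A'_def H_def using pth_generate[OF Ac] A by simp
    have IH: "H \<subseteq> pos_sums G A' (\<Sum>i<r. n' i - 1)"
      by (rule less.hyps[OF lt subH BH pos' ch' A'H genA'])
    have A'ps: "A' \<subseteq> pos_sums G A p" unfolding A'_def using pos_sums_pow[OF Ac] by auto
    have IH2: "H \<subseteq> pos_sums G A (p * (\<Sum>i<r. n' i - 1))"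
      using IH pos_sums_compose[OF Ac A'ps] by auto
    define t where "t = card {i\<in>{..<r}. p dvd n i}"
    have HS: "H \<subseteq> S" unfolding H_def using S subgroup_nat_pow by auto
    have cards: "card S \<le> p ^ t * card H"
      using basis_card[OF B] basis_card[OF BH] prod_split[OF np] unfolding t_def n'_def by simp
    have tw: "\<forall>x\<in>S. \<exists>k\<in>H. \<exists>s\<in>pos_sums G A ((p - 1) * t). x = k \<otimes> s"
      by (rule tower[OF fin p(1) S A subH HS _ cards]) (auto simp: H_def)
    have sumeq: "(\<Sum>i<r. n i - 1) = p * (\<Sum>i<r. n' i - 1) + (p - 1) * t"
      using sum_split[OF np pos] unfolding n'_def t_def by simp
    show ?thesis
    proof
      fix x assume "x \<in> S"
      then obtain k s where ks: "k \<in> H" "s \<in> pos_sums G A ((p - 1) * t)" "x = k \<otimes> s" using tw by auto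
      have "k \<in> pos_sums G A (p * (\<Sum>i<r. n' i - 1))" using IH2 ks by auto
      then have "x \<in> pos_sums G A (p * (\<Sum>i<r. n' i - 1) + (p - 1) * t)"
        using pos_sums_mult[OF Ac _ ks(2)] ks(3) by auto
      then show "x \<in> pos_sums G A (\<Sum>i<r. n i - 1)" using sumeq by simp
    qed
  qed
qed


abbreviation PG :: "nat \<Rightarrow> (nat \<Rightarrow> nat) \<Rightarrow> (nat \<Rightarrow> int) monoid" where
  "PG r m \<equiv> product_group {..<r} (\<lambda>i. integer_mod_group (m i))"

definition ee :: "nat \<Rightarrow> nat \<Rightarrow> nat \<Rightarrow> int" where
  "ee r i = (\<lambda>k\<in>{..<r}. if k = i then 1 else 0)"

lemma ee_pow:
  assumes "\<forall>i<r. 1 < m i" "i < r"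
  shows "ee r i [^]\<^bsub>PG r m\<^esub> (c::nat) = (\<lambda>k\<in>{..<r}. if k = i then int c mod int (m i) else 0)"
proof (induction c)
  case 0 then show ?case by (auto simp: ee_def)
next
  case (Suc c)
  show ?case using Suc assms
    by (auto simp: ee_def fun_eq_iff mod_add_left_eq mod_add_right_eq ac_simps)
qed

lemma mp_PG:
  assumes "\<forall>i<r. 1 < m i"
  shows "k \<le> r \<Longrightarrow> mp (PG r m) (ee r) c k = (\<lambda>j\<in>{..<r}. if j < k then int (c j) mod int (m j) else 0)"
proof (induction k)
  case 0 then show ?case by auto
next
  case (Suc k)
  then have "mp (PG r m) (ee r) c (Suc k) =
     (\<lambda>j\<in>{..<r}. if j < k then int (c j) mod int (m j) else 0) \<otimes>\<^bsub>PG r m\<^esub>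
     (\<lambda>j\<in>{..<r}. if j = k then int (c k) mod int (m k) else 0)"
    using ee_pow[OF assms, of k "c k"] by simp
  also have "\<dots> = (\<lambda>j\<in>{..<r}. if j < Suc k then int (c j) mod int (m j) else 0)"
    by (auto simp: fun_eq_iff)
  finally show ?case .
qed

lemma ee_carrier: "\<forall>i<r. 1 < m i \<Longrightarrow> i < r \<Longrightarrow> ee r i \<in> carrier (PG r m)"
  by (auto simp: ee_def carrier_integer_mod_group)

lemma carrier_PG:
  assumes "\<forall>i<r. 1 < m i"
  shows "y \<in> carrier (PG r m) \<longleftrightarrow> (\<forall>j<r. 0 \<le> y j \<and> y j < int (m j)) \<and> y \<in> extensional {..<r}"
proof -
  have "\<And>j. j < r \<Longrightarrow> m j \<noteq> 0" using assms by fastforce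
  then show ?thesis by (auto simp: PiE_iff carrier_integer_mod_group)
qed

lemma basis_PG:
  assumes m: "\<forall>i<r. 1 < m i"
  shows "basis (PG r m) (carrier (PG r m)) r m (ee r)"
  unfolding basis_def
proof (intro conjI allI impI)
  fix i assume i: "i < r"
  show "ee r i \<in> carrier (PG r m)" by (rule ee_carrier[OF m i])
  show "ee r i [^]\<^bsub>PG r m\<^esub> m i = \<one>\<^bsub>PG r m\<^esub>" using ee_pow[OF m i, of "m i"] by (auto simp: fun_eq_iff)
next
  have eq: "mp (PG r m) (ee r) c r = (\<lambda>j\<in>{..<r}. int (c j))" if "c \<in> PiE {..<r} (\<lambda>i. {..<m i})" for c
    using mp_PG[OF m, of r c] that by (auto simp: fun_eq_iff PiE_iff)
  show "bij_betw (\<lambda>c. mp (PG r m) (ee r) c r) (PiE {..<r} (\<lambda>i. {..<m i})) (carrier (PG r m))"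
  proof (rule bij_betwI[where g = "\<lambda>y. \<lambda>j\<in>{..<r}. nat (y j)"])
    show "(\<lambda>c. mp (PG r m) (ee r) c r) \<in> PiE {..<r} (\<lambda>i. {..<m i}) \<rightarrow> carrier (PG r m)"
    proof (rule funcsetI)
      fix c assume c: "c \<in> PiE {..<r} (\<lambda>i. {..<m i})"
      have "(\<lambda>j\<in>{..<r}. int (c j)) \<in> carrier (PG r m)"
        unfolding carrier_PG[OF m] using c by (auto simp: PiE_iff)
      then show "mp (PG r m) (ee r) c r \<in> carrier (PG r m)" using eq[OF c] by simp
    qed
    show "(\<lambda>y. \<lambda>j\<in>{..<r}. nat (y j)) \<in> carrier (PG r m) \<rightarrow> PiE {..<r} (\<lambda>i. {..<m i})"
    proof (rule funcsetI)
      fix y assume y: "y \<in> carrier (PG r m)"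
      have yy: "\<forall>j<r. 0 \<le> y j \<and> y j < int (m j)" using y carrier_PG[OF m] by blast
      have "nat (y j) < m j" if "j < r" for j using yy that by (simp add: nat_less_iff)
      then show "(\<lambda>j\<in>{..<r}. nat (y j)) \<in> PiE {..<r} (\<lambda>i. {..<m i})" by (simp add: PiE_iff)
    qed
  next
    fix c assume c: "c \<in> PiE {..<r} (\<lambda>i. {..<m i})"
    have ce: "c \<in> extensional {..<r}" using c by (simp add: PiE_iff)
    show "(\<lambda>j\<in>{..<r}. nat (mp (PG r m) (ee r) c r j)) = c"
    proof
      fix j show "(\<lambda>j\<in>{..<r}. nat (mp (PG r m) (ee r) c r j)) j = c j"
        unfolding eq[OF c] using ce by (cases "j < r") (auto simp: extensional_def)
    qed
  next
    fix y assume y: "y \<in> carrier (PG r m)"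
    have yy: "\<forall>j<r. 0 \<le> y j \<and> y j < int (m j)" "y \<in> extensional {..<r}" using y carrier_PG[OF m] by blast+
    have "nat (y j) < m j" if "j < r" for j using yy that by (simp add: nat_less_iff)
    then have inP: "(\<lambda>j\<in>{..<r}. nat (y j)) \<in> PiE {..<r} (\<lambda>i. {..<m i})" by (simp add: PiE_iff)
    show "mp (PG r m) (ee r) (\<lambda>j\<in>{..<r}. nat (y j)) r = y"
    proof
      fix j show "mp (PG r m) (ee r) (\<lambda>j\<in>{..<r}. nat (y j)) r j = y j"
        unfolding eq[OF inP] using yy by (cases "j < r") (auto simp: extensional_def)
    qed
  qed
qed

lemma (in monoid) mp_carrier_m: "(\<And>i. i < k \<Longrightarrow> g i \<in> carrier G) \<Longrightarrow> mp G g c k \<in> carrier G"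
  by (induction k) auto

lemma mp_hom:
  assumes "h \<in> hom H G" "group H" "group G" "\<And>i. i < k \<Longrightarrow> e i \<in> carrier H"
  shows "h (mp H e c k) = mp G (\<lambda>i. h (e i)) c k"
  using assms(4)
proof (induction k)
  case 0 then show ?case using hom_one[OF assms(1-3)] by simp
next
  case (Suc k)
  have "mp H e c k \<in> carrier H"
    by (rule monoid.mp_carrier_m[OF group.is_monoid[OF assms(2)]]) (use Suc.prems in auto)
  then show ?case using Suc hom_mult[OF assms(1)] hom_nat_pow[OF assms(1) _ assms(2,3)]
    by (simp add: group.is_monoid[OF assms(2)] monoid.nat_pow_closed)
qed


lemma sum_upd:
  fixes d :: "nat \<Rightarrow> nat"
  shows "j < (r::nat) \<Longrightarrow> (\<Sum>i<r. (fun_upd d j (d j + 1)) i) = (\<Sum>i<r. d i) + 1"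
proof -
  assume j: "j < r"
  have "(fun_upd d j (d j + 1)) = (\<lambda>i. d i + (if i = j then 1 else 0))" by auto
  then show ?thesis using j by (simp add: sum.distrib)
qed

context comm_group begin

lemma mp_zero: "mp G g (\<lambda>_. 0) k = \<one>"
  by (induction k) auto

lemma pos_sums_rep:
  assumes gc: "\<And>i. i < r \<Longrightarrow> g i \<in> carrier G"
  shows "x \<in> pos_sums G (g ` {..<r}) k \<Longrightarrow> \<exists>d. x = mp G g d r \<and> (\<Sum>i<r. d i) \<le> k"
proof (induction k arbitrary: x)
  case 0 then show ?case using mp_zero by (auto intro!: exI[of _ "\<lambda>_. 0"])
next
  case (Suc k)
  then obtain y a where ya: "x = y \<otimes> a" "y \<in> pos_sums G (g ` {..<r}) k" "a \<in> g ` {..<r} \<union> {\<one>}" by auto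
  obtain d where d: "y = mp G g d r" "(\<Sum>i<r. d i) \<le> k" using Suc.IH[OF ya(2)] by auto
  have yc: "y \<in> carrier G" using d mp_carrier gc by auto
  show ?case
  proof (cases "a = \<one>")
    case True then show ?thesis using ya d yc by auto
  next
    case False
    then obtain j where j: "j < r" "a = g j" using ya by auto
    have "x = mp G g (d(j := d j + 1)) r" using mp_upd[where g=g and k=r and c=d and j=j, OF gc] j ya d by auto
    moreover have "(\<Sum>i<r. (d(j := d j + 1)) i) \<le> Suc k" using sum_upd[OF j(1)] d by simp
    ultimately show ?thesis by blast
  qed
qed

lemma lower_bound:
  assumes B: "basis G (carrier G) r n g" and pos: "\<forall>i<r. 0 < n i" and rho: "\<rho> < (\<Sum>i<r. n i - 1)"
  shows "pos_sums G (g ` {..<r}) \<rho> \<noteq> carrier G"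
proof
  assume eq: "pos_sums G (g ` {..<r}) \<rho> = carrier G"
  have gc: "\<And>i. i < r \<Longrightarrow> g i \<in> carrier G" and gn: "\<And>i. i < r \<Longrightarrow> g i [^] n i = \<one>"
    and bij: "bij_betw (\<lambda>c. mp G g c r) (PiE {..<r} (\<lambda>i. {..<n i})) (carrier G)"
    using B unfolding basis_def by auto
  have gcn: "\<And>i. i < r \<Longrightarrow> g i \<in> carrier G \<and> g i [^] n i = \<one>" using gc gn by auto
  have inj: "inj_on (\<lambda>c. mp G g c r) (PiE {..<r} (\<lambda>i. {..<n i}))" using bij bij_betw_def by blast
  define w where "w = mp G g (\<lambda>i. n i - 1) r"
  have "w \<in> carrier G" unfolding w_def using mp_carrier gc by auto
  then obtain d where d: "w = mp G g d r" "(\<Sum>i<r. d i) \<le> \<rho>" using pos_sums_rep[where g=g and r=r, OF gc] eq by blast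
  have "mp G g (restrict (\<lambda>i. d i mod n i) {..<r}) r = mp G g (\<lambda>i. d i mod n i) r" by (rule mp_cong) auto
  also have "\<dots> = mp G g d r" by (rule mp_mod[OF gcn, symmetric])
  also have "\<dots> = mp G g (restrict (\<lambda>i. n i - 1) {..<r}) r" unfolding d(1)[symmetric] w_def by (rule mp_cong) auto
  finally have "restrict (\<lambda>i. d i mod n i) {..<r} = restrict (\<lambda>i. n i - 1) {..<r}"
    using pos by (intro inj_onD[OF inj]) auto
  then have "\<And>i. i < r \<Longrightarrow> d i mod n i = n i - 1" by (metis lessThan_iff restrict_apply')
  then have "\<And>i. i < r \<Longrightarrow> n i - 1 \<le> d i" by (metis mod_less_eq_dividend)
  then have "(\<Sum>i<r. n i - 1) \<le> (\<Sum>i<r. d i)" by (intro sum_mono) auto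
  then show False using d rho by auto
qed

end

theorem theorem2p1:
  fixes G :: "('a, 'b) monoid_scheme" and r :: nat and m :: "nat \<Rightarrow> nat"
  assumes "comm_group G"
    and "finite (carrier G)"
    and "\<forall>i<r. 1 < m i"
    and "\<forall>i. Suc i < r \<longrightarrow> m i dvd m (Suc i)"
    and "G \<cong> product_group {..<r} (\<lambda>i. integer_mod_group (m i))"
  shows "pos_diam G = enat (\<Sum>i<r. m i - 1)"
proof -
  interpret comm_group G by (rule assms(1))
  define f where "f = (\<Sum>i<r. m i - 1)"
  have grpP: "group (PG r m)" by (rule product_group) simp
  have "PG r m \<cong> G" using iso_sym[OF assms(5)] .
  then obtain \<psi> where psi: "\<psi> \<in> iso (PG r m) G" unfolding is_iso_def by auto
  then have hom: "\<psi> \<in> hom (PG r m) G" and bijpsi: "bij_betw \<psi> (carrier (PG r m)) (carrier G)"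
    unfolding iso_def by auto
  define g where "g = (\<lambda>i. \<psi> (ee r i))"
  have BP: "basis (PG r m) (carrier (PG r m)) r m (ee r)" by (rule basis_PG[OF assms(3)])
  have pos: "\<forall>i<r. 0 < m i" using assms(3) by auto
  have B: "basis G (carrier G) r m g"
    unfolding basis_def
  proof (intro conjI allI impI)
    fix i assume i: "i < r"
    have ec: "ee r i \<in> carrier (PG r m)" by (rule ee_carrier[OF assms(3) i])
    show "g i \<in> carrier G" unfolding g_def using hom ec by (auto simp: hom_def)
    have "g i [^]\<^bsub>G\<^esub> m i = \<psi> (ee r i [^]\<^bsub>PG r m\<^esub> m i)" unfolding g_def
      using hom_nat_pow[OF hom ec grpP is_group] by simp
    also have "\<dots> = \<psi> \<one>\<^bsub>PG r m\<^esub>" using BP i unfolding basis_def by auto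
    also have "\<dots> = \<one>\<^bsub>G\<^esub>" using hom_one[OF hom grpP is_group] .
    finally show "g i [^]\<^bsub>G\<^esub> m i = \<one>\<^bsub>G\<^esub>" .
  next
    have b1: "bij_betw (\<lambda>c. mp (PG r m) (ee r) c r) (PiE {..<r} (\<lambda>i. {..<m i})) (carrier (PG r m))"
      using BP unfolding basis_def by auto
    have "bij_betw (\<psi> \<circ> (\<lambda>c. mp (PG r m) (ee r) c r)) (PiE {..<r} (\<lambda>i. {..<m i})) (carrier G)"
      by (rule bij_betw_trans[OF b1 bijpsi])
    moreover have "(\<psi> \<circ> (\<lambda>c. mp (PG r m) (ee r) c r)) = (\<lambda>c. mp G g c r)"
      unfolding g_def using mp_hom[OF hom grpP is_group] ee_carrier[OF assms(3)] by (auto simp: fun_eq_iff)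
    ultimately show "bij_betw (\<lambda>c. mp G g c r) (PiE {..<r} (\<lambda>i. {..<m i})) (carrier G)" by simp
  qed
  have gc: "\<And>i. i < r \<Longrightarrow> g i \<in> carrier G" using B unfolding basis_def by auto
  have full: "pos_sums G A f = carrier G" if A: "A \<subseteq> carrier G" "generate G A = carrier G" for A
  proof
    show "pos_sums G A f \<subseteq> carrier G" by (rule pos_sums_carrier[OF A(1)])
    show "carrier G \<subseteq> pos_sums G A f" unfolding f_def
      by (rule upper_bound[OF assms(2) subgroup_self B pos assms(4) A])
  qed
  have le: "pos_diam_wrt G A \<le> enat f" if A: "A \<subseteq> carrier G" "generate G A = carrier G" for A
  proof -
    have "\<exists>\<rho>. pos_sums G A \<rho> = carrier G" using full[OF A] by blast
    then have "pos_diam_wrt G A = enat (LEAST \<rho>. pos_sums G A \<rho> = carrier G)" unfolding pos_diam_wrt_def by simp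
    also have "\<dots> \<le> enat f" using Least_le[of "\<lambda>\<rho>. pos_sums G A \<rho> = carrier G", OF full[OF A]] by simp
    finally show ?thesis .
  qed
  define A0 where "A0 = g ` {..<r}"
  have A0c: "A0 \<subseteq> carrier G" unfolding A0_def using gc by auto
  have genA0: "generate G A0 = carrier G"
  proof
    show "generate G A0 \<subseteq> carrier G" by (rule generate_incl[OF A0c])
    show "carrier G \<subseteq> generate G A0"
    proof
      fix x assume "x \<in> carrier G"
      then have "x \<in> (\<lambda>c. mp G g c r) ` (PiE {..<r} (\<lambda>i. {..<m i}))"
        using B unfolding basis_def bij_betw_def by simp
      then obtain c where "x = mp G g c r" by blast
      moreover have "mp G g c r \<in> generate G A0"
        by (rule mp_closed[OF generate_is_subgroup[OF A0c]]) (auto simp: A0_def intro: generate.incl)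
      ultimately show "x \<in> generate G A0" by simp
    qed
  qed
  have eqA0: "pos_diam_wrt G A0 = enat f"
  proof -
    have "\<exists>\<rho>. pos_sums G A0 \<rho> = carrier G" using full[OF A0c genA0] by blast
    then have "pos_diam_wrt G A0 = enat (LEAST \<rho>. pos_sums G A0 \<rho> = carrier G)" unfolding pos_diam_wrt_def by simp
    also have "(LEAST \<rho>. pos_sums G A0 \<rho> = carrier G) = f"
    proof (rule Least_equality)
      show "pos_sums G A0 f = carrier G" by (rule full[OF A0c genA0])
      fix y assume "pos_sums G A0 y = carrier G"
      then show "f \<le> y" using lower_bound[OF B pos] unfolding A0_def f_def by (meson not_le)
    qed
    finally show ?thesis .
  qed
  show ?thesis unfolding pos_diam_def f_def[symmetric]
  proof (rule antisym)
    show "Sup {pos_diam_wrt G A |A. A \<subseteq> carrier G \<and> generate G A = carrier G} \<le> enat f"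
      by (rule Sup_least) (use le in auto)
    show "enat f \<le> Sup {pos_diam_wrt G A |A. A \<subseteq> carrier G \<and> generate G A = carrier G}"
      using eqA0 A0c genA0 by (intro Sup_upper) (auto intro!: exI[of _ A0])
  qed
qed

end
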